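(* Let $f$ be an operation of arity $k$ defined by a set $S$ of unconditional standard rules together with an unconditional default rule $r$ of the form $f\,x_1\ldots x_k = t$, where $x_1,\dots,x_k$ are pairwise distinct variables and $t$ is an expression. Let $\mathcal T$ be a minimal definitional tree of $S$, and let $R$ be the replacement of $r$ with respect to $\mathcal T$. Then for every ground $f$-rooted pattern $p$: $p$ is reduced at the root to some $q$ by the default rule $r$ if and only if $p$ is reduced at the root to $q$ by some rule of $R$.
   Context: Programs are constructor-based, typed rewrite systems: symbols are partitioned into operations and constructors, each data type has a finite set of constructors. An $f$-rooted pattern is a linear expression $f\,\overline{t_n}$ ($f$ an operation of arity $n$) where each $t_i$ consists only of variables and constructors; it is ground if it contains no variables. A rule $l = r$ reduces an expression $e$ at the root to $\sigma(r)$ if $e = \sigma(l)$ for a substitution $\sigma$. The default rule $r$ reduces $p$ at the root (to $\sigma(t)$, where $p=\sigma(f\,\overline{x_k})$) exactly when no rule of $S$ matches $p$. A partial definitional tree with $f$-rooted pattern $p$ is either a rule node $rule(p = r)$, an exempt node $exempt(p)$, or a branch node $branch(p, x, \mathcal{T}_1,\dots,\mathcal{T}_k)$ where $x$ is a variable of $p$ (the inductive variable), $\{c_1,\dots,c_k\}$ is the set of all constructors of the type of $x$, $\sigma_i = \{x \mapsto c_i\,\overline{y_{a_i}}\}$ with fresh variables, and each $\mathcal{T}_i$ is a partial definitional tree with pattern $\sigma_i(p)$. A definitional tree of a set of rules of $f$ is a finite partial definitional tree with pattern $f\,\overline{x_n}$ ($x_i$ pairwise distinct) containing all and only those rules (up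 to renaming). It is minimal if below every branch node there is some rule node. Replacement: if $N_1,\dots,N_m$ are the exempt nodes of $\mathcal T$, $f\,\overline{t^i_k}$ the pattern of $N_i$, and $\sigma_i = \{x_1\mapsto t^i_1,\dots,x_k\mapsto t^i_k\}$, the replacement of $r$ is the set of standard rules $\{\sigma_i(f\,\overline{x_k}) = \sigma_i(t) : 1\le i\le m\}$. *)

theory Defs
  imports Main
begin

text \<open>Symbols of type 'f (operations and constructors, distinguished by a predicate
  is_con), variables of type 'v, data types of type 'ty.\<close>

datatype ('f, 'v) expr = Var 'v | App 'f "('f, 'v) expr list"

fun vars :: "('f, 'v) expr \<Rightarrow> 'v set" where
  "vars (Var v) = {v}"
| "vars (App g es) = \<Union> (set (map vars es))"

fun varlist :: "('f, 'v) expr \<Rightarrow> 'v list" where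
  "varlist (Var v) = [v]"
| "varlist (App g es) = concat (map varlist es)"

definition linear :: "('f, 'v) expr \<Rightarrow> bool" where
  "linear e \<longleftrightarrow> distinct (varlist e)"

definition ground :: "('f, 'v) expr \<Rightarrow> bool" where
  "ground e \<longleftrightarrow> vars e = {}"

fun subst :: "('v \<Rightarrow> ('f, 'v) expr) \<Rightarrow> ('f, 'v) expr \<Rightarrow> ('f, 'v) expr" where
  "subst \<sigma> (Var v) = \<sigma> v"
| "subst \<sigma> (App g es) = App g (map (subst \<sigma>) es)"

fun cterm :: "('f \<Rightarrow> bool) \<Rightarrow> ('f, 'v) expr \<Rightarrow> bool" where
  "cterm is_con (Var v) = True"
| "cterm is_con (App c es) = (is_con c \<and> (\<forall>e\<in>set es. cterm is_con e))"

inductive wt :: "('f \<Rightarrow> 'ty list \<times> 'ty) \<Rightarrow> ('v \<Rightarrow> 'ty) \<Rightarrow> ('f, 'v) expr \<Rightarrow> 'ty \<Rightarrow> bool"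
  for sig vty where
  wt_Var: "wt sig vty (Var v) (vty v)"
| wt_App: "sig g = (Ts, T) \<Longrightarrow> list_all2 (wt sig vty) es Ts \<Longrightarrow> wt sig vty (App g es) T"

definition ctors :: "('f \<Rightarrow> bool) \<Rightarrow> ('f \<Rightarrow> 'ty list \<times> 'ty) \<Rightarrow> 'ty \<Rightarrow> 'f set" where
  "ctors is_con sig T = {c. is_con c \<and> snd (sig c) = T}"

definition rooted_pattern :: "('f \<Rightarrow> bool) \<Rightarrow> ('f \<Rightarrow> 'ty list \<times> 'ty) \<Rightarrow> 'f \<Rightarrow> ('f, 'v) expr \<Rightarrow> bool" where
  "rooted_pattern is_con sig f p \<longleftrightarrow>
     (\<exists>ts. p = App f ts \<and> \<not> is_con f \<and> length ts = length (fst (sig f))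
        \<and> (\<forall>t\<in>set ts. cterm is_con t) \<and> linear p)"

type_synonym ('f, 'v) rule = "('f, 'v) expr \<times> ('f, 'v) expr"

definition matches :: "('f, 'v) expr \<Rightarrow> ('f, 'v) expr \<Rightarrow> bool" where
  "matches l e \<longleftrightarrow> (\<exists>\<sigma>. e = subst \<sigma> l)"

definition root_reduces :: "('f, 'v) rule \<Rightarrow> ('f, 'v) expr \<Rightarrow> ('f, 'v) expr \<Rightarrow> bool" where
  "root_reduces \<rho> e q \<longleftrightarrow> (\<exists>\<sigma>. e = subst \<sigma> (fst \<rho>) \<and> q = subst \<sigma> (snd \<rho>))"

definition default_reduces ::
  "('f, 'v) rule set \<Rightarrow> 'f \<Rightarrow> 'v list \<Rightarrow> ('f, 'v) expr \<Rightarrow> ('f, 'v) expr \<Rightarrow> ('f, 'v) expr \<Rightarrow> bool" where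
  "default_reduces S f xs t e q \<longleftrightarrow>
     (\<forall>\<rho>\<in>S. \<not> matches (fst \<rho>) e) \<and> root_reduces (App f (map Var xs), t) e q"

definition variant :: "('v \<Rightarrow> 'ty) \<Rightarrow> ('f, 'v) rule \<Rightarrow> ('f, 'v) rule \<Rightarrow> bool" where
  "variant vty \<rho> \<rho>' \<longleftrightarrow> (\<exists>\<pi>. bij \<pi> \<and> (\<forall>v. vty (\<pi> v) = vty v)
       \<and> fst \<rho>' = subst (Var \<circ> \<pi>) (fst \<rho>) \<and> snd \<rho>' = subst (Var \<circ> \<pi>) (snd \<rho>))"

datatype ('f, 'v) pdt =
    RuleN "('f, 'v) expr" "('f, 'v) expr"
  | Exempt "('f, 'v) expr"
  | Branch "('f, 'v) expr" 'v "('f, 'v) pdt list"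

fun pattern_of :: "('f, 'v) pdt \<Rightarrow> ('f, 'v) expr" where
  "pattern_of (RuleN p r) = p"
| "pattern_of (Exempt p) = p"
| "pattern_of (Branch p x Ts) = p"

inductive is_pdt :: "('f \<Rightarrow> bool) \<Rightarrow> ('f \<Rightarrow> 'ty list \<times> 'ty) \<Rightarrow> ('v \<Rightarrow> 'ty)
    \<Rightarrow> ('f, 'v) expr \<Rightarrow> ('f, 'v) pdt \<Rightarrow> bool"
  for is_con sig vty where
  pdt_rule: "is_pdt is_con sig vty p (RuleN p r)"
| pdt_exempt: "is_pdt is_con sig vty p (Exempt p)"
| pdt_branch: "x \<in> vars p \<Longrightarrow> distinct cs \<Longrightarrow> set cs = ctors is_con sig (vty x)
    \<Longrightarrow> length cs = length Ts \<Longrightarrow> length yss = length Ts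
    \<Longrightarrow> (\<forall>i < length Ts. distinct (yss ! i) \<and> set (yss ! i) \<inter> vars p = {}
          \<and> map vty (yss ! i) = fst (sig (cs ! i))
          \<and> is_pdt is_con sig vty
               (subst (Var(x := App (cs ! i) (map Var (yss ! i)))) p) (Ts ! i))
    \<Longrightarrow> is_pdt is_con sig vty p (Branch p x Ts)"

fun rules_of :: "('f, 'v) pdt \<Rightarrow> ('f, 'v) rule set" where
  "rules_of (RuleN p r) = {(p, r)}"
| "rules_of (Exempt p) = {}"
| "rules_of (Branch p x Ts) = \<Union> (set (map rules_of Ts))"

fun exempt_patterns :: "('f, 'v) pdt \<Rightarrow> ('f, 'v) expr set" where
  "exempt_patterns (RuleN p r) = {}"
| "exempt_patterns (Exempt p) = {p}"
| "exempt_patterns (Branch p x Ts) = \<Union> (set (map exempt_patterns Ts))"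

fun subtrees :: "('f, 'v) pdt \<Rightarrow> ('f, 'v) pdt set" where
  "subtrees (RuleN p r) = {RuleN p r}"
| "subtrees (Exempt p) = {Exempt p}"
| "subtrees (Branch p x Ts) = insert (Branch p x Ts) (\<Union> (set (map subtrees Ts)))"

definition minimal_pdt :: "('f, 'v) pdt \<Rightarrow> bool" where
  "minimal_pdt T \<longleftrightarrow> (\<forall>B\<in>subtrees T. (\<exists>p x Ts. B = Branch p x Ts) \<longrightarrow> rules_of B \<noteq> {})"

definition def_tree :: "('f \<Rightarrow> bool) \<Rightarrow> ('f \<Rightarrow> 'ty list \<times> 'ty) \<Rightarrow> ('v \<Rightarrow> 'ty)
    \<Rightarrow> 'f \<Rightarrow> ('f, 'v) rule set \<Rightarrow> ('f, 'v) pdt \<Rightarrow> bool" where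
  "def_tree is_con sig vty f S T \<longleftrightarrow>
     (\<exists>zs. distinct zs \<and> length zs = length (fst (sig f))
        \<and> wt sig vty (App f (map Var zs)) (snd (sig f))
        \<and> is_pdt is_con sig vty (App f (map Var zs)) T)
     \<and> (\<forall>\<rho>\<in>S. \<exists>\<rho>'\<in>rules_of T. variant vty \<rho>' \<rho>)
     \<and> (\<forall>\<rho>'\<in>rules_of T. \<exists>\<rho>\<in>S. variant vty \<rho>' \<rho>)"

definition subst_of :: "'v list \<Rightarrow> ('f, 'v) expr list \<Rightarrow> 'v \<Rightarrow> ('f, 'v) expr" where
  "subst_of xs ts v = (case map_of (zip xs ts) v of Some e \<Rightarrow> e | None \<Rightarrow> Var v)"

definition replacement :: "'f \<Rightarrow> 'v list \<Rightarrow> ('f, 'v) expr \<Rightarrow> ('f, 'v) pdt \<Rightarrow> ('f, 'v) rule set" where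
  "replacement f xs t T =
     {(subst (subst_of xs ts) (App f (map Var xs)), subst (subst_of xs ts) t) | ts.
        App f ts \<in> exempt_patterns T}"

end

theory Submission imports Defs begin

lemma subst_comp: "subst \<sigma> (subst \<tau> e) = subst (subst \<sigma> \<circ> \<tau>) e"
  by (induction e) auto

lemma subst_cong: "(\<And>v. v \<in> vars e \<Longrightarrow> a v = b v) \<Longrightarrow> subst a e = subst b e"
  by (induction e) auto

lemma subst_agree: "subst a e = subst b e \<Longrightarrow> v \<in> vars e \<Longrightarrow> a v = b v"
  by (induction e) (auto simp: map_eq_conv)

lemma vars_subst: "v \<in> vars (subst \<tau> e) \<Longrightarrow> \<exists>u\<in>vars e. v \<in> vars (\<tau> u)"
  by (induction e) fastforce+

lemma subst_Var[simp]: "subst Var e = e"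
  by (induction e) (auto simp: map_idI)

lemma wt_subst_var:
  assumes "wt sig vty e \<tau>" "wt sig vty (subst \<sigma> e) \<tau>" "v \<in> vars e"
  shows "wt sig vty (\<sigma> v) (vty v)"
  using assms
proof (induction arbitrary: v rule: wt.induct)
  case (wt_Var u) then show ?case by simp
next
  case (wt_App g Ts T es)
  from wt_App.prems(1) have "list_all2 (wt sig vty) (map (subst \<sigma>) es) Ts"
    using wt_App.hyps(1) by (auto elim: wt.cases)
  moreover from wt_App.prems(2) obtain j where j: "j < length es" "v \<in> vars (es!j)"
    by (auto simp: in_set_conv_nth)
  ultimately show ?case using wt_App.IH j
    by (auto simp: list_all2_conv_all_nth)
qed

lemma leaves_inst:
  assumes "is_pdt is_con sig vty p T"
  shows "(l \<in> fst ` rules_of T \<or> l \<in> exempt_patterns T) \<Longrightarrow> \<exists>\<tau>. l = subst \<tau> p"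
  using assms
proof (induction arbitrary: l rule: is_pdt.induct)
  case (pdt_rule p r) then show ?case by (auto intro: exI[of _ Var])
next
  case (pdt_exempt p) then show ?case by (auto intro: exI[of _ Var])
next
  case (pdt_branch x p cs Ts yss)
  then obtain i where i: "i < length Ts" "l \<in> fst ` rules_of (Ts!i) \<or> l \<in> exempt_patterns (Ts!i)"
  proof -
    from pdt_branch.prems obtain T' where "T' \<in> set Ts" "l \<in> fst ` rules_of T' \<or> l \<in> exempt_patterns T'"
      by force
    then show ?thesis using that by (auto simp: in_set_conv_nth)
  qed
  with pdt_branch.IH obtain \<tau> where
    "l = subst \<tau> (subst (Var(x := App (cs ! i) (map Var (yss ! i)))) p)" by blast
  then show ?case by (auto simp: subst_comp)
qed

lemma disjoint_leaves:
  assumes "is_pdt is_con sig vty p T"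
  shows "(l, r) \<in> rules_of T \<Longrightarrow> l' \<in> exempt_patterns T \<Longrightarrow> subst a l = subst b l' \<Longrightarrow> False"
  using assms
proof (induction arbitrary: l r l' a b rule: is_pdt.induct)
  case (pdt_rule p r) then show ?case by simp
next
  case (pdt_exempt p) then show ?case by simp
next
  case (pdt_branch x p cs Ts yss)
  from pdt_branch.prems(1) obtain i where i: "i < length Ts" "(l, r) \<in> rules_of (Ts!i)"
    by (auto simp: in_set_conv_nth)
  from pdt_branch.prems(2) obtain j where j: "j < length Ts" "l' \<in> exempt_patterns (Ts!j)"
    by (auto simp: in_set_conv_nth)
  show ?case
  proof (cases "i = j")
    case True
    then show ?thesis using pdt_branch.IH i j pdt_branch.prems(3) by blast
  next
    case False
    have pi: "is_pdt is_con sig vty (subst (Var(x := App (cs ! i) (map Var (yss ! i)))) p) (Ts ! i)"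
      using pdt_branch.IH i by blast
    have pj: "is_pdt is_con sig vty (subst (Var(x := App (cs ! j) (map Var (yss ! j)))) p) (Ts ! j)"
      using pdt_branch.IH j by blast
    obtain \<tau> where t: "l = subst \<tau> (subst (Var(x := App (cs ! i) (map Var (yss ! i)))) p)"
      using leaves_inst[OF pi, of l] i by force
    obtain \<tau>' where t': "l' = subst \<tau>' (subst (Var(x := App (cs ! j) (map Var (yss ! j)))) p)"
      using leaves_inst[OF pj, of l'] j by force
    have "subst (subst a \<circ> (subst \<tau> \<circ> (Var(x := App (cs ! i) (map Var (yss ! i)))))) p
        = subst (subst b \<circ> (subst \<tau>' \<circ> (Var(x := App (cs ! j) (map Var (yss ! j)))))) p"
      using pdt_branch.prems(3) t t' by (simp add: subst_comp)
    from subst_agree[OF this pdt_branch.hyps(1)] have "cs ! i = cs ! j" by simp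
    with pdt_branch.hyps(2,4) i j False show False by (simp add: nth_eq_iff_index_eq)
  qed
qed

definition good where
  "good is_con sig vty e v \<longleftrightarrow> ground e \<and> cterm is_con e \<and> wt sig vty e (vty v)"

lemma exhaust_leaves:
  assumes "is_pdt is_con sig vty p T"
  shows "(\<And>v. v \<in> vars p \<Longrightarrow> good is_con sig vty (\<sigma> v) v) \<Longrightarrow>
    (\<exists>l r a. (l, r) \<in> rules_of T \<and> subst \<sigma> p = subst a l) \<or>
    (\<exists>l a. l \<in> exempt_patterns T \<and> subst \<sigma> p = subst a l)"
  using assms
proof (induction arbitrary: \<sigma> rule: is_pdt.induct)
  case (pdt_rule p r) then show ?case by auto
next
  case (pdt_exempt p) then show ?case by auto
next
  case (pdt_branch x p cs Ts yss)
  have gx: "good is_con sig vty (\<sigma> x) x" using pdt_branch.prems pdt_branch.hyps(1) by blast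
  then obtain c args where cx: "\<sigma> x = App c args"
    unfolding good_def ground_def by (cases "\<sigma> x") auto
  from gx cx have conc: "is_con c" and cargs: "\<forall>e\<in>set args. cterm is_con e"
    and gargs: "\<forall>e\<in>set args. ground e"
    by (auto simp: good_def ground_def)
  from gx cx obtain Us where sigc: "sig c = (Us, vty x)" and wargs: "list_all2 (wt sig vty) args Us"
    by (auto simp: good_def elim: wt.cases)
  have "c \<in> ctors is_con sig (vty x)" using conc sigc by (simp add: ctors_def)
  with pdt_branch.hyps(3) obtain i where i: "i < length cs" "cs ! i = c"
    by (metis in_set_conv_nth)
  hence iT: "i < length Ts" using pdt_branch.hyps(4) by simp
  define ys where "ys = yss ! i"
  have all: "distinct ys \<and> set ys \<inter> vars p = {} \<and> map vty ys = fst (sig c)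
    \<and> is_pdt is_con sig vty (subst (Var(x := App c (map Var ys))) p) (Ts ! i)
    \<and> (\<forall>\<sigma>'. (\<forall>v. v \<in> vars (subst (Var(x := App c (map Var ys))) p) \<longrightarrow> good is_con sig vty (\<sigma>' v) v) \<longrightarrow>
    (\<exists>l r a. (l, r) \<in> rules_of (Ts!i) \<and> subst \<sigma>' (subst (Var(x := App c (map Var ys))) p) = subst a l) \<or>
    (\<exists>l a. l \<in> exempt_patterns (Ts!i) \<and> subst \<sigma>' (subst (Var(x := App c (map Var ys))) p) = subst a l))"
    using pdt_branch.IH iT unfolding ys_def i(2)[symmetric] by blast
  have ys: "distinct ys" "set ys \<inter> vars p = {}" "map vty ys = Us"
  proof -
    from all have "distinct ys" "set ys \<inter> vars p = {}" "map vty ys = fst (sig c)" by blast+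
    then show "distinct ys" "set ys \<inter> vars p = {}" "map vty ys = Us" using sigc by simp_all
  qed
  have IH: "\<And>\<sigma>'. (\<And>v. v \<in> vars (subst (Var(x := App c (map Var ys))) p) \<Longrightarrow> good is_con sig vty (\<sigma>' v) v) \<Longrightarrow>
    (\<exists>l r a. (l, r) \<in> rules_of (Ts!i) \<and> subst \<sigma>' (subst (Var(x := App c (map Var ys))) p) = subst a l) \<or>
    (\<exists>l a. l \<in> exempt_patterns (Ts!i) \<and> subst \<sigma>' (subst (Var(x := App c (map Var ys))) p) = subst a l)"
    using all by blast
  have len: "length ys = length args"
    using ys(3) wargs by (metis length_map list_all2_lengthD)
  define \<sigma>' where "\<sigma>' v = (case map_of (zip ys args) v of Some e \<Rightarrow> e | None \<Rightarrow> \<sigma> v)" for v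
  have s'ys: "\<sigma>' (ys ! j) = args ! j" if "j < length ys" for j
    using that len ys(1) by (simp add: \<sigma>'_def map_of_zip_nth)
  have s'out: "\<sigma>' v = \<sigma> v" if "v \<notin> set ys" for v
  proof -
    have "map_of (zip ys args) v = None" using that len by (simp add: map_of_eq_None_iff set_map[symmetric] del: set_map)
    then show ?thesis by (simp add: \<sigma>'_def)
  qed
  have mapys: "map \<sigma>' ys = args"
    by (rule nth_equalityI) (simp_all add: len s'ys)
  have eq: "subst \<sigma>' (subst (Var(x := App c (map Var ys))) p) = subst \<sigma> p"
    unfolding subst_comp
  proof (rule subst_cong)
    fix v assume v: "v \<in> vars p"
    show "(subst \<sigma>' \<circ> Var(x := App c (map Var ys))) v = \<sigma> v"
    proof (cases "v = x")
      case True then show ?thesis using cx mapys by (simp add: comp_def)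
    next
      case False
      with v ys(2) have "v \<notin> set ys" by blast
      with False show ?thesis using s'out by simp
    qed
  qed
  have "(\<exists>l r a. (l, r) \<in> rules_of (Ts!i) \<and> subst \<sigma>' (subst (Var(x := App c (map Var ys))) p) = subst a l) \<or>
    (\<exists>l a. l \<in> exempt_patterns (Ts!i) \<and> subst \<sigma>' (subst (Var(x := App c (map Var ys))) p) = subst a l)"
  proof (rule IH)
    fix v assume A:  "v \<in> vars (subst (Var(x := App c (map Var ys))) p)"
    then obtain u where u: "u \<in> vars p" "v \<in> vars ((Var(x := App c (map Var ys))) u)"
      using vars_subst[OF A] by blast
    show "good is_con sig vty (\<sigma>' v) v"
    proof (cases "u = x")
      case True
      have "v \<in> set ys" using u(2) True by simp
      then obtain j where j: "j < length ys" "v = ys ! j" by (metis in_set_conv_nth)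
      hence "args ! j \<in> set args" using len by (metis nth_mem)
      moreover have "wt sig vty (args ! j) (vty v)"
      proof -
        have "wt sig vty (args ! j) (Us ! j)" using wargs j(1) len list_all2_nthD by metis
        moreover have "Us ! j = vty v" using ys(3) j by (metis nth_map)
        ultimately show ?thesis by simp
      qed
      ultimately show ?thesis using j s'ys[OF j(1)] cargs gargs unfolding good_def by simp
    next
      case False
      have "v = u" using u(2) False by simp
      with u(1) ys(2) have "v \<notin> set ys" by blast
      then have "\<sigma>' v = \<sigma> v" by (rule s'out)
      moreover have "good is_con sig vty (\<sigma> v) v" using pdt_branch.prems u(1) \<open>v = u\<close> by blast
      ultimately show ?thesis by simp
    qed
  qed
  then have "(\<exists>l r a. (l, r) \<in> rules_of (Ts!i) \<and> subst \<sigma> p = subst a l) \<or>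
    (\<exists>l a. l \<in> exempt_patterns (Ts!i) \<and> subst \<sigma> p = subst a l)" by (simp only: eq)
  moreover have "rules_of (Ts!i) \<subseteq> rules_of (Branch p x Ts)"
    using nth_mem[OF iT] by force
  moreover have "exempt_patterns (Ts!i) \<subseteq> exempt_patterns (Branch p x Ts)"
    using nth_mem[OF iT] by force
  ultimately show ?case by (meson subsetD)
qed

lemma subst_of_nth: "distinct xs \<Longrightarrow> length xs = length ts \<Longrightarrow> j < length xs \<Longrightarrow> subst_of xs ts (xs ! j) = ts ! j"
  by (simp add: subst_of_def map_of_zip_nth)

lemma map_subst_of: "distinct xs \<Longrightarrow> length xs = length ts \<Longrightarrow> map (subst_of xs ts) xs = ts"
  by (rule nth_equalityI) (simp_all add: subst_of_nth)

lemma variant_matches: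
  assumes "variant vty \<rho>' \<rho>" "e = subst a (fst \<rho>)"
  shows "\<exists>b. e = subst b (fst \<rho>')"
proof -
  from assms(1) obtain \<pi> where "fst \<rho> = subst (Var \<circ> \<pi>) (fst \<rho>')" unfolding variant_def by blast
  with assms(2) show ?thesis by (auto simp: subst_comp)
qed

theorem mainTheorem5:
  fixes is_con :: "'f \<Rightarrow> bool"
    and sig :: "'f \<Rightarrow> 'ty list \<times> 'ty"
    and vty :: "'v \<Rightarrow> 'ty"
    and f :: 'f and k :: nat
    and S :: "('f, 'v) rule set"
    and xs :: "'v list" and t :: "('f, 'v) expr"
    and T :: "('f, 'v) pdt"
  assumes fin_ctors: "\<And>\<tau>. finite (ctors is_con sig \<tau>)"
    and f_op: "\<not> is_con f"
    and f_arity: "length (fst (sig f)) = k"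
    and S_std: "\<And>l r. (l, r) \<in> S \<Longrightarrow> rooted_pattern is_con sig f l"
    and xs_dist: "distinct xs" and xs_len: "length xs = k"
    and t_vars: "vars t \<subseteq> set xs"
    and T_def: "def_tree is_con sig vty f S T"
    and T_min: "minimal_pdt T"
  shows "\<forall>p q. rooted_pattern is_con sig f p \<and> ground p \<and> wt sig vty p (snd (sig f)) \<longrightarrow>
           (default_reduces S f xs t p q \<longleftrightarrow>
            (\<exists>\<rho>\<in>replacement f xs t T. root_reduces \<rho> p q))"
proof (intro allI impI)
  fix p q
  assume P: "rooted_pattern is_con sig f p \<and> ground p \<and> wt sig vty p (snd (sig f))"
  have TD: "(\<exists>zs. distinct zs \<and> length zs = length (fst (sig f))
        \<and> wt sig vty (App f (map Var zs)) (snd (sig f))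
        \<and> is_pdt is_con sig vty (App f (map Var zs)) T)"
    using T_def unfolding def_tree_def by (rule conjunct1)
  have Sin: "\<forall>\<rho>\<in>S. \<exists>\<rho>'\<in>rules_of T. variant vty \<rho>' \<rho>"
    using T_def unfolding def_tree_def by (elim conjE)
  have Tin: "\<forall>\<rho>'\<in>rules_of T. \<exists>\<rho>\<in>S. variant vty \<rho>' \<rho>"
    using T_def unfolding def_tree_def by (elim conjE)
  from TD obtain zs where zs: "distinct zs" "length zs = k"
    "wt sig vty (App f (map Var zs)) (snd (sig f))"
    "is_pdt is_con sig vty (App f (map Var zs)) T"
    using f_arity by (elim exE conjE) simp
  define P0 where "P0 = App f (map Var zs)"
  from P have "\<exists>ts. p = App f ts \<and> \<not> is_con f \<and> length ts = length (fst (sig f))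
        \<and> (\<forall>t\<in>set ts. cterm is_con t) \<and> linear p" unfolding rooted_pattern_def by (elim conjE)
  then obtain ps where ps: "p = App f ps" "length ps = k" "\<forall>e\<in>set ps. cterm is_con e"
    using f_arity by (elim exE conjE) simp
  have ex_inst: "\<exists>ts. l = App f ts \<and> length ts = k" if "l \<in> exempt_patterns T" for l
  proof -
    have "\<exists>\<tau>. l = subst \<tau> P0" unfolding P0_def by (rule leaves_inst[OF zs(4)]) (simp add: that)
    then obtain \<tau> where "l = subst \<tau> P0" ..
    then show ?thesis using zs(2) by (auto simp: P0_def)
  qed
  have no_both: False if "\<exists>\<rho>\<in>S. matches (fst \<rho>) p" "l \<in> exempt_patterns T" "p = subst a l" for l a
  proof -
    from that(1) obtain \<rho> b where "\<rho> \<in> S" "p = subst b (fst \<rho>)" unfolding matches_def by blast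
    with Sin obtain \<rho>' where "\<rho>' \<in> rules_of T" "variant vty \<rho>' \<rho>" by blast
    then obtain c where "p = subst c (fst \<rho>')" using variant_matches \<open>p = subst b (fst \<rho>)\<close> by blast
    then show False using disjoint_leaves[OF zs(4), of "fst \<rho>'" "snd \<rho>'" l c a] that(2,3) \<open>\<rho>' \<in> rules_of T\<close>
      by simp
  qed
  have repl: "replacement f xs t T = {(App f ts, subst (subst_of xs ts) t) | ts. App f ts \<in> exempt_patterns T}"
  proof -
    have H: "subst (subst_of xs ts) (App f (map Var xs)) = App f ts" if "App f ts \<in> exempt_patterns T" for ts
    proof -
      have "map (subst_of xs ts) xs = ts" using ex_inst[OF that] xs_dist xs_len by (intro map_subst_of) auto
      then show ?thesis by (simp add: comp_def)
    qed
    show ?thesis unfolding replacement_def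
      by (rule Collect_cong) (metis (no_types, lifting) H)
  qed
  show "default_reduces S f xs t p q \<longleftrightarrow> (\<exists>\<rho>\<in>replacement f xs t T. root_reduces \<rho> p q)"
  proof
    assume D: "default_reduces S f xs t p q"
    then obtain \<sigma> where sig: "p = subst \<sigma> (App f (map Var xs))" "q = subst \<sigma> t"
      and nom: "\<forall>\<rho>\<in>S. \<not> matches (fst \<rho>) p"
      unfolding default_reduces_def root_reduces_def by auto
    have psx: "ps = map \<sigma> xs" using sig(1) ps(1) by simp
    define \<sigma>0 where "\<sigma>0 = subst_of zs ps"
    have p0: "subst \<sigma>0 P0 = p" unfolding P0_def \<sigma>0_def using zs ps
      by (simp add: comp_def map_subst_of)
    have good0: "good is_con sig vty (\<sigma>0 v) v" if "v \<in> vars P0" for v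
    proof -
      from that obtain j where j: "j < length zs" "v = zs ! j" by (auto simp: P0_def in_set_conv_nth)
      have e: "\<sigma>0 v = ps ! j" using j zs ps by (simp add: \<sigma>0_def subst_of_nth)
      have mem: "ps ! j \<in> set ps" using j zs(2) ps(2) by simp
      have "ground (ps ! j)" using P mem ps(1) by (auto simp: ground_def)
      moreover have "cterm is_con (ps ! j)" using ps(3) mem by blast
      moreover have "wt sig vty (\<sigma>0 v) (vty v)"
        using wt_subst_var[OF zs(3), of \<sigma>0 v] p0 P that unfolding P0_def by simp
      ultimately show ?thesis unfolding good_def using e by simp
    qed
    from exhaust_leaves[OF zs(4)[folded P0_def] good0] p0
    have "(\<exists>l r a. (l, r) \<in> rules_of T \<and> p = subst a l) \<or> (\<exists>l a. l \<in> exempt_patterns T \<and> p = subst a l)"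
      by simp
    moreover have "\<not> (\<exists>l r a. (l, r) \<in> rules_of T \<and> p = subst a l)"
    proof
      assume "\<exists>l r a. (l, r) \<in> rules_of T \<and> p = subst a l"
      then obtain l r a where lr: "(l, r) \<in> rules_of T" "p = subst a l" by blast
      from Tin lr(1) obtain \<rho> where "\<rho> \<in> S" "variant vty (l, r) \<rho>" by blast
      then obtain \<pi> where "fst \<rho> = subst (Var \<circ> \<pi>) l" "bij \<pi>" unfolding variant_def by auto
      then have "p = subst (a \<circ> inv \<pi>) (fst \<rho>)" using lr(2)
        by (simp add: subst_comp comp_def bij_is_inj) 
      then show False using nom \<open>\<rho> \<in> S\<close> unfolding matches_def by blast
    qed
    ultimately obtain l a where la: "l \<in> exempt_patterns T" "p = subst a l" by blast
    then obtain ts where ts: "l = App f ts" "length ts = k" using ex_inst by blast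
    have psa: "ps = map (subst a) ts" using la(2) ts(1) ps(1) by simp
    have "q = subst a (subst (subst_of xs ts) t)"
      unfolding sig(2) subst_comp
    proof (rule subst_cong)
      fix v assume "v \<in> vars t"
      with t_vars obtain j where j: "j < length xs" "v = xs ! j" by (metis in_set_conv_nth subsetD)
      have "\<sigma> v = ps ! j" using psx j by simp
      also have "\<dots> = subst a (ts ! j)" using psa j ts(2) xs_len by simp
      also have "\<dots> = (subst a \<circ> subst_of xs ts) v" using j ts(2) xs_len xs_dist by (simp add: subst_of_nth)
      finally show "\<sigma> v = (subst a \<circ> subst_of xs ts) v" .
    qed
    then have "root_reduces (App f ts, subst (subst_of xs ts) t) p q"
      unfolding root_reduces_def using la(2) ts(1) by auto
    then show "\<exists>\<rho>\<in>replacement f xs t T. root_reduces \<rho> p q"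
      unfolding repl using la(1) ts(1) by blast
  next
    assume "\<exists>\<rho>\<in>replacement f xs t T. root_reduces \<rho> p q"
    then obtain ts a where ts: "App f ts \<in> exempt_patterns T"
      and pq: "p = subst a (App f ts)" "q = subst a (subst (subst_of xs ts) t)"
      unfolding repl root_reduces_def by (auto simp del: subst.simps)
    obtain ts' where "App f ts = App f ts'" "length ts' = k" using ex_inst[OF ts] by blast
    hence lts: "length ts = k" by simp
    have nom: "\<forall>\<rho>\<in>S. \<not> matches (fst \<rho>) p"
      using no_both[OF _ ts pq(1)] by blast
    have mts: "map (subst_of xs ts) xs = ts" using lts xs_dist xs_len by (intro map_subst_of) auto
    have "p = subst (subst a \<circ> subst_of xs ts) (App f (map Var xs))"
    proof -
      have mm: "map (subst a \<circ> subst_of xs ts) xs = map (subst a) ts"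
        by (simp only: map_map[symmetric] mts)
      have "subst (subst a \<circ> subst_of xs ts) (App f (map Var xs)) = App f (map (subst a \<circ> subst_of xs ts) xs)"
        by (simp add: comp_def)
      also have "\<dots> = p" using pq(1) mm by simp
      finally show ?thesis by simp
    qed
    moreover have "q = subst (subst a \<circ> subst_of xs ts) t" using pq(2) by (simp add: subst_comp)
    ultimately show "default_reduces S f xs t p q"
      unfolding default_reduces_def root_reduces_def fst_conv snd_conv using nom by blast
  qed
qed
end
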